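(* Let $n\ge 2$ and let $\alpha,\beta$ be $n$-cycles in the symmetric group $S_{n+1}$. Then there is an integer $d$ with $1\le d\le n-1$ such that $\alpha\beta^d$ is not an $n$-cycle.
   Context: Permutations act on the right and $\alpha\beta$ means first $\alpha$, then $\beta$. *)

theory Defs
  imports "HOL-Combinatorics.Combinatorics"
begin

text \<open>The symmetric group S_m is modelled as the permutations of {1..m}
  (functions nat => nat permuting {1..m}, identity outside).\<close>

definition is_k_cycle_in :: "nat \<Rightarrow> nat \<Rightarrow> (nat \<Rightarrow> nat) \<Rightarrow> bool" where
  "is_k_cycle_in m k p \<longleftrightarrow>
     (\<exists>cs. distinct cs \<and> length cs = k \<and> set cs \<subseteq> {1..m} \<and> p = cycle_of_list cs)"

text \<open>Product convention: permutations act on the right, so alpha beta means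
  first alpha then beta, i.e. the function beta o alpha.\<close>

definition perm_mult :: "(nat \<Rightarrow> nat) \<Rightarrow> (nat \<Rightarrow> nat) \<Rightarrow> (nat \<Rightarrow> nat)" where
  "perm_mult a b = b \<circ> a"

end

theory Submission imports Defs begin

lemma H1:
  assumes "distinct cs" "i < length cs"
  shows "(cycle_of_list cs ^^ d) (cs!i) = cs ! ((i+d) mod length cs)"
proof -
  have "map (cycle_of_list cs ^^ d) cs ! i = rotate d cs ! i"
    using cyclic_rotation[OF assms(1)] by simp
  then show ?thesis using assms(2) by (simp add: nth_rotate add.commute)
qed

lemma H2:
  assumes "distinct cs" "x \<in> set cs" "y \<in> set cs"
  shows "\<exists>d < length cs. (cycle_of_list cs ^^ d) y = x"
proof -
  obtain i where i: "i < length cs" "x = cs!i" using assms(2) by (metis in_set_conv_nth)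
  obtain j where j: "j < length cs" "y = cs!j" using assms(3) by (metis in_set_conv_nth)
  let ?n = "length cs"
  define d where "d = (i + ?n - j) mod ?n"
  have "(j + d) mod ?n = i"
    proof -
    have "(j + d) mod ?n = (j + (i + ?n - j)) mod ?n" unfolding d_def by (simp add: mod_add_right_eq)
    also have "j + (i + ?n - j) = i + ?n" using j by simp
    finally show ?thesis using i by simp
  qed
  moreover have "d < ?n" unfolding d_def using i by (intro mod_less_divisor) auto
  ultimately show ?thesis using H1[OF assms(1) j(1), of d] i j by auto
qed

lemma H3:
  assumes "distinct cs" "y \<in> set cs" "d1 < length cs" "d2 < length cs"
    "(cycle_of_list cs ^^ d1) y = (cycle_of_list cs ^^ d2) y"
  shows "d1 = d2"
proof -
  obtain j where j: "j < length cs" "y = cs!j" using assms(2) by (metis in_set_conv_nth)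
  let ?n = "length cs"
  have "cs ! ((j+d1) mod ?n) = cs ! ((j+d2) mod ?n)"
    using assms(5) H1[OF assms(1) j(1)] j by simp
  hence "(j+d1) mod ?n = (j+d2) mod ?n"
  proof -
    have "(j+d1) mod ?n < ?n" using j(1) by (intro mod_less_divisor) auto
    have "(j+d2) mod ?n < ?n" using j(1) by (intro mod_less_divisor) auto
    thus ?thesis using \<open>(j+d1) mod ?n < ?n\<close> nth_eq_iff_index_eq[OF assms(1)] \<open>cs ! ((j+d1) mod ?n) = cs ! ((j+d2) mod ?n)\<close> by blast
  qed
  hence "d1 mod ?n = d2 mod ?n" by (simp add: nat_mod_eq_iff)
  thus ?thesis using assms(3,4) by simp
qed

lemma H4a:
  assumes "distinct cs" "length cs = n" "set cs \<subseteq> {1..n+1}"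
  obtains c where "{1..n+1} - set cs = {c}"
proof -
  have "card ({1..n+1} - set cs) = 1"
    using assms by (simp add: card_Diff_subset distinct_card)
  thus ?thesis using that by (meson card_1_singletonE)
qed

lemma H4b:
  assumes "distinct cs" "length cs \<ge> 2" "x \<in> set cs"
  shows "cycle_of_list cs x \<noteq> x"
proof -
  obtain i where i: "i < length cs" "x = cs!i" using assms(3) by (metis in_set_conv_nth)
  have "cycle_of_list cs x = cs ! ((i+1) mod length cs)"
    using H1[OF assms(1) i(1), of 1] i by simp
  moreover have "(i+1) mod length cs \<noteq> i"
    proof (cases "i+1 = length cs")
    case True thus ?thesis using assms(2) by simp
  next
    case False thus ?thesis using i(1) by simp
  qed
  moreover have "(i+1) mod length cs < length cs" using i(1) by (intro mod_less_divisor) auto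
  ultimately show ?thesis using i(1) i(2) nth_eq_iff_index_eq[OF assms(1)] by auto
qed

lemma fix_ex:
  assumes "is_k_cycle_in (n+1) n p"
  shows "\<exists>c\<in>{1..n+1}. p c = c"
proof -
  obtain cs where cs: "distinct cs" "length cs = n" "set cs \<subseteq> {1..n+1}" "p = cycle_of_list cs"
    using assms unfolding is_k_cycle_in_def by blast
  obtain c where c: "{1..n+1} - set cs = {c}" using H4a[OF cs(1-3)] by blast
  hence "c \<in> {1..n+1}" "c \<notin> set cs" by auto
  thus ?thesis using cs(4) id_outside_supp[of c cs] by auto
qed

lemma fix_uniq:
  assumes "is_k_cycle_in (n+1) n p" "n \<ge> 2" "x \<in> {1..n+1}" "y \<in> {1..n+1}" "p x = x" "p y = y"
  shows "x = y"
proof -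
  obtain cs where cs: "distinct cs" "length cs = n" "set cs \<subseteq> {1..n+1}" "p = cycle_of_list cs"
    using assms unfolding is_k_cycle_in_def by blast
  obtain c where c: "{1..n+1} - set cs = {c}" using H4a[OF cs(1-3)] by blast
  have "x \<notin> set cs" using H4b[OF cs(1), of x] cs(2,4) assms(2,5) by auto
  have "y \<notin> set cs" using H4b[OF cs(1), of y] cs(2,4) assms(2,6) by auto
  thus ?thesis using \<open>x \<notin> set cs\<close> c assms(3,4) by (metis DiffI singletonD)
qed

theorem lemma1:
  fixes n :: nat and \<alpha> \<beta> :: "nat \<Rightarrow> nat"
  assumes "n \<ge> 2"
    and "is_k_cycle_in (n + 1) n \<alpha>"
    and "is_k_cycle_in (n + 1) n \<beta>"
  shows "\<exists>d::nat. 1 \<le> d \<and> d \<le> n - 1 \<and>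
           \<not> is_k_cycle_in (n + 1) n (perm_mult \<alpha> (\<beta> ^^ d))"
proof (rule ccontr)
  assume "\<not> ?thesis"
  hence H: "\<And>d. 1 \<le> d \<Longrightarrow> d \<le> n - 1 \<Longrightarrow> is_k_cycle_in (n + 1) n ((\<beta> ^^ d) \<circ> \<alpha>)"
    unfolding perm_mult_def by blast
  obtain as where as: "distinct as" "length as = n" "set as \<subseteq> {1..n+1}" "\<alpha> = cycle_of_list as"
    using assms(2) unfolding is_k_cycle_in_def by blast
  obtain bs where bs: "distinct bs" "length bs = n" "set bs \<subseteq> {1..n+1}" "\<beta> = cycle_of_list bs"
    using assms(3) unfolding is_k_cycle_in_def by blast
  obtain a where a: "{1..n+1} - set as = {a}" using H4a[OF as(1-3)] by blast
  obtain b where b: "{1..n+1} - set bs = {b}" using H4a[OF bs(1-3)] by blast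
  have aI: "a \<in> {1..n+1}" "a \<notin> set as" using a by auto
  have bI: "b \<in> {1..n+1}" "b \<notin> set bs" using b by auto
  have inas: "x \<in> set as" if "x \<in> {1..n+1}" "x \<noteq> a" for x using a that by blast
  have inbs: "x \<in> set bs" if "x \<in> {1..n+1}" "x \<noteq> b" for x using b that by blast
  have aperm: "\<alpha> permutes set as" using as(4) cycle_permutes by simp
  have bperm: "(\<beta> ^^ d) permutes set bs" for d unfolding bs(4) by (rule permutes_funpow[OF cycle_permutes])
  have afix: "\<alpha> a = a" using as(4) aI(2) id_outside_supp by simp
  have bfix: "(\<beta> ^^ d) b = b" for d using permutes_not_in[OF bperm[of d] bI(2)] .
  have ain: "\<alpha> x \<in> {1..n+1}" if "x \<in> {1..n+1}" for x
  proof (cases "x \<in> set as")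
    case True
    hence "\<alpha> x \<in> set as" using permutes_in_image[OF aperm] by simp
    thus ?thesis using as(3) by blast
  next
    case False thus ?thesis using that as(4) id_outside_supp[OF False] by simp
  qed
  have amove: "\<alpha> x \<noteq> x" if "x \<in> set as" for x using H4b[OF as(1) _ that] as(2,4) assms(1) by simp
  have ainj: "\<alpha> x = \<alpha> y \<Longrightarrow> x = y" for x y using permutes_inj[OF aperm] by (simp add: inj_eq)
  have binj: "(\<beta> ^^ d) x = (\<beta> ^^ d) y \<Longrightarrow> x = y" for d x y using permutes_inj[OF bperm[of d]] by (simp add: inj_eq)
  have bH2: "\<exists>d<n. (\<beta> ^^ d) y = x" if "x \<in> set bs" "y \<in> set bs" for x y
    using H2[OF bs(1) that] bs(2,4) by simp
  have bH3: "d1 = d2" if "y \<in> set bs" "d1 < n" "d2 < n" "(\<beta> ^^ d1) y = (\<beta> ^^ d2) y" for y d1 d2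
    using H3[OF bs(1) that(1)] that bs(2,4) by simp
  show False
  proof (cases "\<alpha> b = b")
    case True
    have "b \<notin> set as" using amove True by blast
    hence ba: "b = a" using a bI(1) by blast
    define x where "x = bs ! 0"
    have xbs: "x \<in> set bs" unfolding x_def using bs(2) assms(1) by simp
    have xin: "x \<in> {1..n+1}" using xbs bs(3) by blast
    have xb: "x \<noteq> b" using xbs bI(2) by blast
    have "\<alpha> x \<noteq> b" using ainj[of x b] True xb by auto
    hence axbs: "\<alpha> x \<in> set bs" using inbs ain xin by blast
    obtain d where d: "d < n" "(\<beta> ^^ d) (\<alpha> x) = x" using bH2[OF xbs axbs] by blast
    have "\<alpha> x \<noteq> x" using amove[OF inas[OF xin]] xb ba by simp
    hence "d \<noteq> 0" using d(2) by (cases d) auto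
    hence cyc: "is_k_cycle_in (n + 1) n ((\<beta> ^^ d) \<circ> \<alpha>)" using H d(1) by simp
    have "x = b" using fix_uniq[OF cyc assms(1) xin bI(1)] d(2) True bfix by simp
    thus False using xb by simp
  next
    case False
    have bas: "b \<in> set as" using False as(4) id_outside_supp[of b as] by auto
    have ab: "a \<noteq> b" using bas aI(2) by blast
    have "b \<in> \<alpha> ` set as" using permutes_image[OF aperm] bas by simp
    then obtain e where e: "e \<in> set as" "\<alpha> e = b" by blast
    have ein: "e \<in> {1..n+1}" using e as(3) by blast
    have ea: "e \<noteq> a" using e(2) afix ab by auto
    have eb: "e \<noteq> b" using e(2) False by auto
    define F where "F = {1..n+1} - {a,b,e}"
    have "card {a,b,e} = 3" using ab ea eb by auto
    hence cardF: "card F = n - 2" unfolding F_def using aI(1) bI(1) ein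
      by (subst card_Diff_subset) auto
    have "\<forall>d\<in>{1..n-1}. \<exists>c\<in>{1..n+1}. ((\<beta> ^^ d) \<circ> \<alpha>) c = c"
    proof
      fix d assume "d \<in> {1..n-1}"
      hence "is_k_cycle_in (n + 1) n ((\<beta> ^^ d) \<circ> \<alpha>)" using H by simp
      thus "\<exists>c\<in>{1..n+1}. ((\<beta> ^^ d) \<circ> \<alpha>) c = c" by (rule fix_ex)
    qed
    then obtain g where g0: "\<forall>d\<in>{1..n-1}. g d \<in> {1..n+1} \<and> ((\<beta> ^^ d) \<circ> \<alpha>) (g d) = g d"
      using bchoice[of "{1..n-1}" "\<lambda>d c. c \<in> {1..n+1} \<and> ((\<beta> ^^ d) \<circ> \<alpha>) c = c"] by blast
    have g: "g d \<in> {1..n+1} \<and> (\<beta> ^^ d) (\<alpha> (g d)) = g d" if "d \<in> {1..n-1}" for d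
      using g0 that by simp
    have gF: "g d \<in> F" if dd: "d \<in> {1..n-1}" for d
    proof -
      have g1: "g d \<in> {1..n+1}" and g2: "(\<beta> ^^ d) (\<alpha> (g d)) = g d" using g[OF dd] by auto
      have "g d \<noteq> b"
      proof
        assume "g d = b"
        hence "(\<beta> ^^ d) (\<alpha> b) = (\<beta> ^^ d) b" using g2 bfix by simp
        thus False using binj False by blast
      qed
      moreover have "g d \<noteq> e" using g2 e(2) bfix[of d] eb by auto
      moreover have "g d \<noteq> a"
      proof
        assume "g d = a"
        hence "(\<beta> ^^ d) a = (\<beta> ^^ 0) a" using g2 afix by simp
        moreover have "d < n" using dd assms(1) by auto
        ultimately have "d = 0" using bH3[of a d 0] inbs[OF aI(1) ab] assms(1) by auto
        thus False using dd by simp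
      qed
      ultimately show ?thesis unfolding F_def using g1 by blast
    qed
    have "inj_on g {1..n-1}"
    proof (rule inj_onI)
      fix d1 d2 assume d1: "d1 \<in> {1..n-1}" and d2: "d2 \<in> {1..n-1}" and eq: "g d1 = g d2"
      have "g d1 \<noteq> e" using gF[OF d1] unfolding F_def by blast
      hence "\<alpha> (g d1) \<noteq> b" using e(2) ainj[of "g d1" e] by auto
      moreover have "\<alpha> (g d1) \<in> {1..n+1}" using ain g[OF d1] by blast
      ultimately have "\<alpha> (g d1) \<in> set bs" using inbs by blast
      moreover have "(\<beta> ^^ d1) (\<alpha> (g d1)) = (\<beta> ^^ d2) (\<alpha> (g d1))"
        using g[OF d1] g[OF d2] eq by simp
      ultimately show "d1 = d2" using bH3 d1 d2 assms(1) by auto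
    qed
    moreover have "g ` {1..n-1} \<subseteq> F" using gF by blast
    moreover have "finite F" unfolding F_def by simp
    ultimately have "card {1..n-1} \<le> card F" by (rule card_inj_on_le)
    thus False using cardF assms(1) by simp
  qed
qed

end
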